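(* Let $\mathcal{S}$ be a subset of $\mathbb{P}^2(\mathbb{F}_q)$ with $|\mathcal{S}|=q+2$, and suppose there is some $P\in\mathcal{S}$ such that no line through $P$ contains at least three points of $\mathcal{S}$. Then after a suitable change of projective coordinates, $\mathcal{S}=\mathcal{S}_f$ for some $f(X)\in\mathbb{F}_q[X]$. Moreover, if there are two such points $P\in\mathcal{S}$, then after a suitable change of coordinates $\mathcal{S}=\mathcal{S}_f$ for some $f(X)\in\mathbb{F}_q[X]$ which permutes $\mathbb{F}_q$.
   Context: $q$ is a prime power. For $f(X)\in\mathbb{F}_q[X]$, $\mathcal{S}_f:=\{(c:f(c):1):c\in\mathbb{F}_q\}\cup\{(1:0:0),(0:1:0)\}\subseteq\mathbb{P}^2(\mathbb{F}_q)$. A polynomial permutes $\mathbb{F}_q$ if the map $c\mapsto f(c)$ is a bijection $\mathbb{F}_q\to\mathbb{F}_q$. *)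

theory Defs
  imports "HOL-Analysis.Analysis" "HOL-Computational_Algebra.Polynomial"
begin

definition pclass :: "'a::field ^ 3 \<Rightarrow> ('a ^ 3) set" where
  "pclass v = {c *s v | c. c \<noteq> 0}"

definition P2 :: "('a::field ^ 3) set set" where
  "P2 = pclass ` {v. v \<noteq> 0}"

definition pline :: "'a::field ^ 3 \<Rightarrow> ('a ^ 3) set set" where
  "pline l = {pclass v | v. v \<noteq> 0 \<and> (\<Sum>i\<in>UNIV. l $ i * v $ i) = 0}"

definition is_line :: "('a::field ^ 3) set set \<Rightarrow> bool" where
  "is_line L \<longleftrightarrow> (\<exists>l. l \<noteq> 0 \<and> L = pline l)"

definition pmap :: "'a::field ^ 3 ^ 3 \<Rightarrow> ('a ^ 3) set set \<Rightarrow> ('a ^ 3) set set" where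
  "pmap A S = (\<lambda>P. (\<lambda>v. A *v v) ` P) ` S"

definition S_f :: "'a::field poly \<Rightarrow> ('a ^ 3) set set" where
  "S_f f = {pclass (vector [c, poly f c, 1]) | c. True}
           \<union> {pclass (vector [1, 0, 0]), pclass (vector [0, 1, 0])}"

definition good_point :: "('a::field ^ 3) set set \<Rightarrow> ('a ^ 3) set \<Rightarrow> bool" where
  "good_point S P \<longleftrightarrow> P \<in> S \<and> (\<forall>L. is_line L \<and> P \<in> L \<longrightarrow> card (L \<inter> S) < 3)"

end

theory Submission
  imports Defs
begin

lemma pclass_self: "v \<in> pclass v"
  unfolding pclass_def by (rule CollectI, rule exI[of _ 1]) simp

lemma pclass_scale: assumes "c \<noteq> 0" shows "pclass (c *s v) = pclass v"
proof
  show "pclass (c *s v) \<subseteq> pclass v"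
  proof
    fix x assume "x \<in> pclass (c *s v)"
    then obtain d where "d \<noteq> 0" "x = d *s (c *s v)" unfolding pclass_def by auto
    then have "x = (d * c) *s v" "d * c \<noteq> 0" using assms by (simp_all add: vector_smult_assoc)
    then show "x \<in> pclass v" unfolding pclass_def by auto
  qed
  show "pclass v \<subseteq> pclass (c *s v)"
  proof
    fix x assume "x \<in> pclass v"
    then obtain d where "d \<noteq> 0" "x = d *s v" unfolding pclass_def by auto
    then have "x = (d / c) *s (c *s v)" "d / c \<noteq> 0" using assms by (simp_all add: vector_smult_assoc)
    then show "x \<in> pclass (c *s v)" unfolding pclass_def by blast
  qed
qed

lemma pclass_eqD: "pclass v = pclass w \<Longrightarrow> \<exists>c. c \<noteq> 0 \<and> w = c *s v"
proof -
  assume "pclass v = pclass w"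
  then have "w \<in> pclass v" using pclass_self by metis
  then show ?thesis unfolding pclass_def by auto
qed

lemma pclass_in_pline:
  assumes "v \<noteq> 0"
  shows "pclass v \<in> pline l \<longleftrightarrow> (\<Sum>i\<in>UNIV. l $ i * v $ i) = 0"
proof
  assume "pclass v \<in> pline l"
  then obtain w where w: "w \<noteq> 0" "pclass v = pclass w" "(\<Sum>i\<in>UNIV. l $ i * w $ i) = 0"
    unfolding pline_def by auto
  then obtain c where "v = c *s w" using pclass_eqD by metis
  then show "(\<Sum>i\<in>UNIV. l $ i * v $ i) = 0" using w(3)
    by (simp add: algebra_simps flip: sum_distrib_left)
next
  assume "(\<Sum>i\<in>UNIV. l $ i * v $ i) = 0"
  then show "pclass v \<in> pline l" unfolding pline_def using assms by auto
qed

lemma ptm_pclass: "(\<lambda>v. A *v v) ` pclass v = pclass (A *v v)"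
proof
  show "(\<lambda>v. A *v v) ` pclass v \<subseteq> pclass (A *v v)"
    unfolding pclass_def by (auto simp: vector_scalar_commute)
  show "pclass (A *v v) \<subseteq> (\<lambda>v. A *v v) ` pclass v"
  proof
    fix x assume "x \<in> pclass (A *v v)"
    then obtain c where "c \<noteq> 0" "x = c *s (A *v v)" unfolding pclass_def by auto
    then have "x = A *v (c *s v)" "c *s v \<in> pclass v"
      unfolding pclass_def by (auto simp: vector_scalar_commute)
    then show "x \<in> (\<lambda>v. A *v v) ` pclass v" by blast
  qed
qed

lemma norm3:
  assumes "v $ 3 \<noteq> 0"
  shows "pclass v = pclass (vector [v$1/v$3, v$2/v$3, 1])"
proof -
  have "vector [v$1/v$3, v$2/v$3, 1] = (1/v$3) *s v"
    using assms by (simp add: vec_eq_iff forall_3)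
  then show ?thesis using assms by (simp add: pclass_scale)
qed

lemma pclass_v1_inj:
  assumes "pclass (vector [a,b,1]) = (pclass (vector [a',b',1]) :: ('a::field^3) set)"
  shows "a = a' \<and> b = b'"
proof -
  obtain c where "c \<noteq> 0" "(vector [a',b',1] :: 'a^3) = c *s vector [a,b,1]"
    using pclass_eqD[OF assms] by blast
  then have "a' = c * a" "b' = c * b" "1 = c" 
    by (simp_all add: vec_eq_iff forall_3)
  then show ?thesis by simp
qed

lemma pclass_ne1: "pclass (vector [a,b,1]) \<noteq> (pclass (vector [x,y,0]) :: ('a::field^3) set)"
proof
  assume "pclass (vector [a,b,1]) = (pclass (vector [x,y,0]) :: ('a::field^3) set)"
  from pclass_eqD[OF this[symmetric]] obtain c where "c \<noteq> 0" "(vector [a,b,1] :: 'a^3) = c *s vector [x,y,0]"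
    by blast
  then show False by (simp add: vec_eq_iff forall_3)
qed

lemma E12_ne: "pclass (vector [1,0,0]) \<noteq> (pclass (vector [0,1,0]) :: ('a::field^3) set)"
proof
  assume "pclass (vector [1,0,0]) = (pclass (vector [0,1,0]) :: ('a::field^3) set)"
  from pclass_eqD[OF this] obtain c where "c \<noteq> 0" "(vector [0,1,0] :: 'a^3) = c *s vector [1,0,0]"
    by blast
  then show False by (simp add: vec_eq_iff forall_3)
qed

lemma vec_nz: "(vector [a,b,c] :: 'a::field^3) \<noteq> 0 \<longleftrightarrow> a \<noteq> 0 \<or> b \<noteq> 0 \<or> c \<noteq> 0"
  by (simp add: vec_eq_iff forall_3)

lemma three_pts:
  assumes "good_point S P" "finite S" "l \<noteq> 0" "P \<in> pline l" "X \<in> pline l \<inter> S" "Y \<in> pline l \<inter> S"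
    "P \<noteq> X" "P \<noteq> Y" "X \<noteq> Y"
  shows False
proof -
  have "P \<in> S" using assms(1) unfolding good_point_def by auto
  have "card (pline l \<inter> S) < 3" using assms(1,3,4) unfolding good_point_def is_line_def by auto
  moreover have "{P,X,Y} \<subseteq> pline l \<inter> S" using assms \<open>P \<in> S\<close> by auto
  then have "card {P,X,Y} \<le> card (pline l \<inter> S)" using assms(2) by (intro card_mono) auto
  ultimately show False using assms(7-9) by auto
qed

lemma core:
  fixes S :: "('a::{field,finite} ^ 3) set set"
  defines "E1 \<equiv> pclass (vector [1,0,0]) :: ('a^3) set"
  defines "E2 \<equiv> pclass (vector [0,1,0]) :: ('a^3) set"
  assumes SP: "S \<subseteq> P2" and card: "card S = CARD('a) + 2"
    and g2: "good_point S E2" and E1S: "E1 \<in> S"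
  shows "\<exists>g. S = {pclass (vector [c, g c, 1]) | c. True} \<union> {E1, E2}
              \<and> (good_point S E1 \<longrightarrow> inj g)"
proof -
  have fin: "finite S" using card card.infinite by fastforce
  have E2S: "E2 \<in> S" using g2 unfolding good_point_def by auto
  have E12: "E1 \<noteq> E2" unfolding E1_def E2_def by (rule E12_ne)
  define h where "h = (\<lambda>(a::'a,b::'a). pclass (vector [a,b,1]) :: ('a^3) set)"
  have hinj: "inj h" unfolding h_def by (auto intro!: injI dest: pclass_v1_inj)
  have hne: "h x \<noteq> E1" "h x \<noteq> E2" for x
    unfolding h_def E1_def E2_def by (auto split: prod.splits simp: pclass_ne1)
  define T where "T = {x. h x \<in> S}"
  have zl: "(0::'a^3) \<noteq> vector [0,0,1]" by (simp add: vec_nz)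
  have E1z: "E1 \<in> pline (vector [0,0,1])" unfolding E1_def
    by (subst pclass_in_pline) (simp_all add: vec_nz sum_3)
  have E2z: "E2 \<in> pline (vector [0,0,1])" unfolding E2_def
    by (subst pclass_in_pline) (simp_all add: vec_nz sum_3)
  have repr: "X \<in> h ` T" if XS: "X \<in> S" "X \<noteq> E1" "X \<noteq> E2" for X
  proof -
    obtain v where v: "v \<noteq> 0" "X = pclass v" using SP XS(1) unfolding P2_def by auto
    show ?thesis
    proof (cases "v $ 3 = 0")
      case True
      then have "X \<in> pline (vector [0,0,1])" using v by (simp add: pclass_in_pline sum_3)
      then show ?thesis using three_pts[OF g2 fin zl[symmetric] E2z, of E1 X] XS E1S E12 E1z by auto
    next
      case False
      then have "X = h (v$1/v$3, v$2/v$3)" unfolding h_def using v norm3 by auto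
      then show ?thesis unfolding T_def using XS by auto
    qed
  qed
  have hT: "h ` T = S - {E1, E2}"
    using repr hne unfolding T_def by blast
  have cT: "card T = CARD('a)"
  proof -
    have "card (h ` T) = card T" using hinj by (simp add: card_image inj_on_subset)
    moreover have "card (S - {E1,E2}) = card S - 2" using E1S E2S E12 fin
      by (simp add: card_Diff_subset)
    ultimately show ?thesis using hT card by simp
  qed
  have fstinj: "b = b'" if "(a,b) \<in> T" "(a,b') \<in> T" for a b b'
  proof (rule ccontr)
    assume ne: "b \<noteq> b'"
    let ?l = "vector [1,0,-a] :: 'a^3"
    have l0: "?l \<noteq> 0" by (simp add: vec_nz)
    have e2: "E2 \<in> pline ?l" unfolding E2_def
      by (subst pclass_in_pline) (simp_all add: vec_nz sum_3)
    have hl: "h (a,c) \<in> pline ?l" for c unfolding h_def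
      by (simp add: pclass_in_pline vec_nz sum_3)
    have hh: "h (a,b) \<noteq> h (a,b')" using hinj ne by (auto dest: injD)
    have "h (a,b) \<in> S" "h (a,b') \<in> S" using that unfolding T_def by auto
    then show False using three_pts[OF g2 fin l0 e2, of "h (a,b)" "h (a,b')"] hl hh hne by (metis IntI)
  qed
  have fT: "fst ` T = UNIV"
  proof -
    have "inj_on fst T" using fstinj by (auto intro!: inj_onI)
    then have "card (fst ` T) = CARD('a)" using cT by (simp add: card_image)
    then show ?thesis by (simp add: card_eq_UNIV_imp_eq_UNIV)
  qed
  define g where "g a = (SOME b. (a,b) \<in> T)" for a
  have gT: "(a, g a) \<in> T" for a
  proof -
    have "\<exists>b. (a,b) \<in> T" using fT by (metis UNIV_I fst_conv imageE prod.collapse)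
    then show ?thesis unfolding g_def by (rule someI_ex)
  qed
  have gu: "(a,b) \<in> T \<Longrightarrow> b = g a" for a b using fstinj gT by blast
  have Seq: "S = {pclass (vector [c, g c, 1]) | c. True} \<union> {E1, E2}"
  proof
    show "S \<subseteq> {pclass (vector [c, g c, 1]) | c. True} \<union> {E1, E2}"
    proof
      fix X assume X: "X \<in> S"
      show "X \<in> {pclass (vector [c, g c, 1]) | c. True} \<union> {E1, E2}"
      proof (cases "X = E1 \<or> X = E2")
        case False
        have "X \<in> h ` T" using repr[OF X] False by blast
        then obtain a b where "(a,b) \<in> T" "X = h (a,b)" by auto
        then show ?thesis using gu unfolding h_def by auto
      qed auto
    qed
    show "{pclass (vector [c, g c, 1]) | c. True} \<union> {E1, E2} \<subseteq> S"
      using gT E1S E2S unfolding T_def h_def by auto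
  qed
  have "inj g" if g1: "good_point S E1"
  proof (rule injI, rule ccontr)
    fix a a' assume eq: "g a = g a'" and ne: "a \<noteq> a'"
    let ?l = "vector [0,1,-g a] :: 'a^3"
    have l0: "?l \<noteq> 0" by (simp add: vec_nz)
    have e1: "E1 \<in> pline ?l" unfolding E1_def
      by (subst pclass_in_pline) (simp_all add: vec_nz sum_3)
    have hl: "h (x,g a) \<in> pline ?l" for x unfolding h_def
      by (simp add: pclass_in_pline vec_nz sum_3)
    have hh: "h (a,g a) \<noteq> h (a',g a)" using hinj ne by (auto dest: injD)
    have "h (a,g a) \<in> S" "h (a',g a) \<in> S" using gT[of a] gT[of a'] eq unfolding T_def by auto
    then show False using three_pts[OF g1 fin l0 e1, of "h (a,g a)" "h (a',g a)"] hl hh hne by (metis IntI)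
  qed
  then show ?thesis using Seq by blast
qed

lemma interp:
  fixes g :: "'a::{field,finite} \<Rightarrow> 'a"
  shows "\<exists>f. \<forall>x. poly f x = g x"
proof -
  define D where "D a = (\<Prod>b\<in>UNIV-{a}. (a - b))" for a :: 'a
  define f where "f = (\<Sum>a\<in>UNIV. smult (g a / D a) (\<Prod>b\<in>UNIV-{a}. [:-b,1:]))"
  have "poly f x = g x" for x
  proof -
    have pf: "poly f x = (\<Sum>a\<in>UNIV. g a / D a * (\<Prod>b\<in>UNIV-{a}. (x - b)))"
      unfolding f_def by (simp add: poly_sum poly_prod)
    have z: "(\<Prod>b\<in>UNIV-{a}. (x - b)) = 0" if "a \<noteq> x" for a
      using that by (simp add: prod_zero_iff)
    have "(\<Sum>a\<in>UNIV. g a / D a * (\<Prod>b\<in>UNIV-{a}. (x - b)))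
        = g x / D x * (\<Prod>b\<in>UNIV-{x}. (x - b)) + (\<Sum>a\<in>UNIV-{x}. g a / D a * (\<Prod>b\<in>UNIV-{a}. (x - b)))"
      by (simp add: sum.remove)
    also have "(\<Sum>a\<in>UNIV-{x}. g a / D a * (\<Prod>b\<in>UNIV-{a}. (x - b))) = 0"
      using z by (intro sum.neutral) auto
    also have "D x \<noteq> 0" unfolding D_def by (simp add: prod_zero_iff)
    then have "g x / D x * (\<Prod>b\<in>UNIV-{x}. (x - b)) = g x" unfolding D_def by simp
    finally show ?thesis using pf by simp
  qed
  then show ?thesis by blast
qed

lemma transport_good:
  fixes A :: "'a::field^3^3"
  assumes inv: "invertible A" and SP: "S \<subseteq> P2" and g: "good_point S X"
  shows "good_point ((\<lambda>Y. (\<lambda>v. A *v v) ` Y) ` S) ((\<lambda>v. A *v v) ` X)"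
proof -
  let ?m = "\<lambda>Y. (\<lambda>v. A *v v) ` Y"
  have injA: "inj ((*v) A)" using inv by (rule inj_matrix_vector_mult)
  have injm: "inj ?m" by (rule injI) (use injA in \<open>simp add: inj_image_eq_iff\<close>)
  have A0: "A *v v \<noteq> 0" if "v \<noteq> 0" for v
    using injA that by (metis injD matrix_vector_mult_0_right)
  obtain A' where AA': "A ** A' = mat 1" using inv unfolding invertible_def by blast
  have XS: "X \<in> S" using g unfolding good_point_def by auto
  show ?thesis unfolding good_point_def
  proof (intro conjI allI impI)
    show "?m X \<in> ?m ` S" using XS by blast
    fix L assume L: "is_line L \<and> ?m X \<in> L"
    then obtain l where l: "l \<noteq> 0" "L = pline l" unfolding is_line_def by auto
    define l' where "l' = l v* A"
    have l'0: "l' \<noteq> 0"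
    proof
      assume "l' = 0"
      then have "l' v* A' = 0" by (simp add: vec_eq_iff vector_matrix_mult_def)
      moreover have "l' v* A' = l" unfolding l'_def by (simp add: vector_matrix_mul_assoc AA')
      ultimately show False using l by simp
    qed
    have key: "?m Y \<in> pline l \<longleftrightarrow> Y \<in> pline l'" if YP: "Y \<in> P2" for Y
    proof -
      obtain v where v: "v \<noteq> 0" "Y = pclass v" using YP unfolding P2_def by auto
      have "(\<Sum>i\<in>UNIV. l $ i * (A *v v) $ i) = (\<Sum>i\<in>UNIV. l' $ i * v $ i)"
        unfolding l'_def by (simp add: sum_3 matrix_vector_mult_def vector_matrix_mult_def algebra_simps)
      then show ?thesis using v A0[OF v(1)] by (simp add: ptm_pclass pclass_in_pline)
    qed
    have eq: "L \<inter> ?m ` S = ?m ` (pline l' \<inter> S)"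
      using key SP l(2) by auto
    have "card (L \<inter> ?m ` S) = card (pline l' \<inter> S)"
      unfolding eq by (rule card_image) (use injm in \<open>auto intro: inj_on_subset\<close>)
    moreover have "X \<in> pline l'" using key[of X] XS SP L l by auto
    then have "card (pline l' \<inter> S) < 3" using g l'0 unfolding good_point_def is_line_def by auto
    ultimately show "card (L \<inter> ?m ` S) < 3" by simp
  qed
qed

definition mkB :: "'a::field^3 \<Rightarrow> 'a^3 \<Rightarrow> 'a^3 \<Rightarrow> 'a^3^3" where
  "mkB r p w = (\<chi> i. \<chi> j. if j = 1 then r$i else if j = 2 then p$i else w$i)"

lemma mkB_det: "det (mkB r p (vector [1,0,0])) = r$2*p$3 - r$3*p$2"
  "det (mkB r p (vector [0,1,0])) = r$3*p$1 - r$1*p$3"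
  "det (mkB r p (vector [0,0,1])) = r$1*p$2 - r$2*p$1"
  by (simp_all add: det_3 mkB_def algebra_simps)

lemma mkB_mul: "mkB r p w *v vector [1,0,0] = r" "mkB r p w *v vector [0,1,0] = p"
  by (simp_all add: vec_eq_iff forall_3 mkB_def matrix_vector_mult_def sum_3)

lemma prop_of_minors:
  fixes r p :: "'a::field^3"
  assumes p: "p \<noteq> 0" and m1: "r$2*p$3 - r$3*p$2 = 0" and m2: "r$3*p$1 - r$1*p$3 = 0"
    and m3: "r$1*p$2 - r$2*p$1 = 0"
  shows "\<exists>c. r = c *s p"
proof -
  have "p$1 \<noteq> 0 \<or> p$2 \<noteq> 0 \<or> p$3 \<noteq> 0" using p by (auto simp: vec_eq_iff forall_3)
  then show ?thesis
  proof (elim disjE)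
    assume h: "p$1 \<noteq> 0"
    show ?thesis
      by (rule exI[of _ "r$1/p$1"]) (use h m2 m3 in \<open>simp add: vec_eq_iff forall_3 field_simps\<close>)
  next
    assume h: "p$2 \<noteq> 0"
    show ?thesis
      by (rule exI[of _ "r$2/p$2"]) (use h m1 m3 in \<open>simp add: vec_eq_iff forall_3 field_simps\<close>)
  next
    assume h: "p$3 \<noteq> 0"
    show ?thesis
      by (rule exI[of _ "r$3/p$3"]) (use h m1 m2 in \<open>simp add: vec_eq_iff forall_3 field_simps\<close>)
  qed
qed

lemma reduce:
  fixes S :: "('a::field^3) set set"
  assumes SP: "S \<subseteq> P2" and PS: "P \<in> S" and QS: "Q \<in> S" and PQ: "P \<noteq> Q"
  shows "\<exists>A. invertible A \<and> (\<lambda>v. A *v v) ` P = pclass (vector [0,1,0])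
            \<and> (\<lambda>v. A *v v) ` Q = pclass (vector [1,0,0])"
proof -
  obtain p where p: "p \<noteq> 0" "P = pclass p" using SP PS unfolding P2_def by auto
  obtain r where r: "r \<noteq> 0" "Q = pclass r" using SP QS unfolding P2_def by auto
  have np: "\<not> (\<exists>c. r = c *s p)"
  proof
    assume "\<exists>c. r = c *s p"
    then obtain c where c: "r = c *s p" by blast
    show False
    proof (cases "c = 0")
      case True then show False using c r by simp
    next
      case False then show False using c p r PQ pclass_scale by metis
    qed
  qed
  have "\<exists>w. det (mkB r p w) \<noteq> 0"
  proof (rule ccontr)
    assume "\<not> ?thesis"
    then have "det (mkB r p (vector [1,0,0])) = 0" "det (mkB r p (vector [0,1,0])) = 0"
      "det (mkB r p (vector [0,0,1])) = 0" by auto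
    then show False using prop_of_minors[OF p(1)] np unfolding mkB_det by blast
  qed
  then obtain w where "det (mkB r p w) \<noteq> 0" by blast
  then have "invertible (mkB r p w)" by (simp add: invertible_det_nz)
  then obtain A where A: "mkB r p w ** A = mat 1" "A ** mkB r p w = mat 1"
    unfolding invertible_def by blast
  have iA: "invertible A" unfolding invertible_def using A by blast
  have "A *v p = vector [0,1,0]"
    using mkB_mul(2)[of r p w] by (metis A(2) matrix_vector_mul_assoc matrix_vector_mul_lid)
  moreover have "A *v r = vector [1,0,0]"
    using mkB_mul(1)[of r p w] by (metis A(2) matrix_vector_mul_assoc matrix_vector_mul_lid)
  ultimately show ?thesis using iA p r by (auto simp: ptm_pclass)
qed

lemma finish:
  fixes S :: "('a::{field,finite} ^ 3) set set"
  assumes SP: "S \<subseteq> P2" and card: "card S = CARD('a) + 2"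
    and gP: "good_point S P" and QS: "Q \<in> S" and PQ: "P \<noteq> Q"
  shows "\<exists>A f. invertible A \<and> pmap A S = S_f f \<and> (good_point S Q \<longrightarrow> bij (poly f))"
proof -
  let ?m = "\<lambda>A Y. (\<lambda>v. A *v v) ` Y"
  have PS: "P \<in> S" using gP unfolding good_point_def by auto
  obtain A where A: "invertible A" "?m A P = pclass (vector [0,1,0])" "?m A Q = pclass (vector [1,0,0])"
    using reduce[OF SP PS QS PQ] by blast
  have injA: "inj ((*v) A)" using A(1) by (rule inj_matrix_vector_mult)
  have injm: "inj (?m A)" by (rule injI) (use injA in \<open>simp add: inj_image_eq_iff\<close>)
  have pm: "pmap A S = ?m A ` S" unfolding pmap_def by simp
  have SP': "pmap A S \<subseteq> P2"
  proof
    fix Z assume "Z \<in> pmap A S"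
    then obtain Y where Y: "Y \<in> S" "Z = ?m A Y" unfolding pm by auto
    obtain v where v: "v \<noteq> 0" "Y = pclass v" using SP Y(1) unfolding P2_def by auto
    have "A *v v \<noteq> 0" using injA v(1) by (metis injD matrix_vector_mult_0_right)
    then show "Z \<in> P2" using Y v unfolding P2_def by (auto simp: ptm_pclass)
  qed
  have card': "card (pmap A S) = CARD('a) + 2" unfolding pm using card injm
    by (simp add: card_image inj_on_subset)
  have g2: "good_point (pmap A S) (pclass (vector [0,1,0]))"
    using transport_good[OF A(1) SP gP] A(2) unfolding pm by simp
  have E1: "pclass (vector [1,0,0]) \<in> pmap A S" using QS A(3) unfolding pm by (metis image_eqI)
  obtain g where g: "pmap A S = {pclass (vector [c, g c, 1]) | c. True} \<union> {pclass (vector [1,0,0]), pclass (vector [0,1,0])}"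
    "good_point (pmap A S) (pclass (vector [1,0,0])) \<longrightarrow> inj g"
    using core[OF SP' card' g2 E1] by blast
  obtain f where f: "\<forall>x. poly f x = g x" using interp by blast
  then have fg: "poly f = g" by auto
  have "pmap A S = S_f f" unfolding S_f_def g(1) fg by (rule refl)
  moreover have "bij (poly f)" if gQ: "good_point S Q"
  proof -
    have "good_point (pmap A S) (pclass (vector [1,0,0]))"
      using transport_good[OF A(1) SP gQ] A(3) unfolding pm by simp
    then have "inj g" using g(2) by blast
    then show ?thesis unfolding fg bij_def by (simp add: finite_UNIV_inj_surj)
  qed
  ultimately show ?thesis using A(1) by blast
qed

theorem lemma2p1:
  fixes S :: "('a::{field,finite} ^ 3) set set"
  assumes "S \<subseteq> P2"
    and "card S = CARD('a) + 2"
  shows "((\<exists>P. good_point S P) \<longrightarrow>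
            (\<exists>A f. invertible A \<and> pmap A S = S_f f))
       \<and> ((\<exists>P Q. P \<noteq> Q \<and> good_point S P \<and> good_point S Q) \<longrightarrow>
            (\<exists>A f. invertible A \<and> pmap A S = S_f f \<and> bij (poly f)))"
proof (intro conjI impI)
  assume "\<exists>P. good_point S P"
  then obtain P where gP: "good_point S P" by blast
  have "\<exists>Q\<in>S. Q \<noteq> P"
  proof (rule ccontr)
    assume "\<not> ?thesis"
    then have "S \<subseteq> {P}" by auto
    then have "card S \<le> card {P}" by (intro card_mono) simp_all
    then show False using assms(2) by simp
  qed
  then obtain Q where "Q \<in> S" "Q \<noteq> P" by blast
  then show "\<exists>A f. invertible A \<and> pmap A S = S_f f"
    using finish[OF assms gP] by blast
next
  assume "\<exists>P Q. P \<noteq> Q \<and> good_point S P \<and> good_point S Q"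
  then obtain P Q where "P \<noteq> Q" "good_point S P" "good_point S Q" by blast
  moreover then have "Q \<in> S" unfolding good_point_def by auto
  ultimately show "\<exists>A f. invertible A \<and> pmap A S = S_f f \<and> bij (poly f)"
    using finish[OF assms] by blast
qed

end
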